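(* Let $Q,M,B\in\mathbb{R}^{n\times n}$ be symmetric positive semidefinite, set $M_B=BMB$, and assume $\operatorname{Im}\{M_B\}\subseteq\operatorname{Im}\{Q\}$. Define $$\Omega=\{\Pi\in\mathbb{R}^{n\times n}: Q-\Pi M^\dagger\Pi^\top\succeq0,\ \Pi^\top=MM^\dagger\Pi^\top\},$$ $$\mathcal{S}=\{(S,S^-): S\succeq0,\ S^-\succeq0,\ SS^-S=S,\ S^-SS^-=S^-,\ BM=SS^-BM\}.$$ Then $$\min_{(S,S^-)\in\mathcal{S}}\big\{\operatorname{tr}(QS)+\operatorname{tr}(M\,BS^-B)\big\}=\max_{\Pi\in\Omega}\operatorname{tr}\{2\Pi B\}=2\operatorname{tr}\Big\{\big(M_B^{1/2}QM_B^{1/2}\big)^{1/2}\Big\}.$$ The extreme values are attained at $S^*=M_B^{1/2}\big((M_B^{1/2}QM_B^{1/2})^{1/2}\big)^\dagger M_B^{1/2}$, $S^{-*}=(M_B^{1/2})^\dagger(M_B^{1/2}QM_B^{1/2})^{1/2}(M_B^{1/2})^\dagger$, and $\Pi^*=QS^*M_B^\dagger BM=QM_B^{1/2}\big((M_B^{1/2}QM_B^{1/2})^{1/2}\big)^\dagger(M_B^{1/2})^\dagger BM$; the optimal $\Pi^*$ is in general not unique.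
   Context: $\dagger$ denotes the Moore–Penrose pseudoinverse, $\operatorname{Im}$ the column space, and $X^{1/2}$ the PSD square root of a PSD matrix $X$. *)

theory Defs
  imports "HOL-Analysis.Analysis"
begin

definition psd :: "real^'n^'n \<Rightarrow> bool" where
  "psd A \<longleftrightarrow> transpose A = A \<and> (\<forall>x. 0 \<le> x \<bullet> (A *v x))"

text \<open>Moore--Penrose pseudoinverse, via the four Penrose conditions (unique solution).\<close>
definition pinv :: "real^'n^'m \<Rightarrow> real^'m^'n" where
  "pinv A = (THE X. A ** X ** A = A \<and> X ** A ** X = X \<and>
                    transpose (A ** X) = A ** X \<and> transpose (X ** A) = X ** A)"

definition psd_sqrt :: "real^'n^'n \<Rightarrow> real^'n^'n" where
  "psd_sqrt A = (THE X. psd X \<and> X ** X = A)"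

definition col_space :: "real^'n^'m \<Rightarrow> (real^'m) set" where
  "col_space A = range (\<lambda>x. A *v x)"

end

theory Submission
  imports Defs
begin

lemma sym_dot:
  fixes A :: "real^'n^'n"
  assumes "transpose A = A"
  shows "(A *v x) \<bullet> y = x \<bullet> (A *v y)"
  by (metis assms dot_lmul_matrix inner_commute transpose_matrix_vector)

lemma real_quad_zero:
  fixes c k :: real
  assumes "\<And>t. 2 * t * c \<le> t\<^sup>2 * k"
  shows "c = 0"
proof (rule ccontr)
  assume c: "c \<noteq> 0"
  define s where "s = \<bar>k\<bar> + 1"
  have s: "s > 0" "k \<le> s" unfolding s_def by auto
  define t where "t = c / (2 * s)"
  have "2 * t * c \<le> t\<^sup>2 * k" by (rule assms)
  also have "\<dots> \<le> t\<^sup>2 * s" using s by (simp add: mult_left_mono)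
  also have "t\<^sup>2 * s = c\<^sup>2 / (4 * s)" unfolding t_def using s
    by (simp add: power2_eq_square field_simps)
  finally have 1: "2 * t * c \<le> c\<^sup>2 / (4 * s)" .
  have 2: "2 * t * c = c\<^sup>2 / s" unfolding t_def using s by (simp add: power2_eq_square field_simps)
  have "c\<^sup>2 / s > 0" using c s by simp
  then have "c\<^sup>2 / (4 * s) < c\<^sup>2 / s" using s by (simp add: field_simps)
  with 1 2 show False by linarith
qed

lemma spectral_aux:
  fixes A :: "real^'n^'n"
  assumes sym: "transpose A = A"
  shows "subspace V \<Longrightarrow> (\<forall>x\<in>V. A *v x \<in> V) \<Longrightarrow>
    \<exists>E. E \<subseteq> V \<and> pairwise orthogonal E \<and> (\<forall>x\<in>E. norm x = 1) \<and> (\<forall>x\<in>E. \<exists>c. A *v x = c *\<^sub>R x) \<and> span E = V"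
proof (induction "dim V" arbitrary: V rule: less_induct)
  case less
  show ?case
  proof (cases "V = {0}")
    case True show ?thesis by (rule exI[of _ "{}"]) (simp add: True)
  next
    case False
    then obtain a where a: "a \<in> V" "a \<noteq> 0" using False subspace_0[OF less(2)] by blast
    define K where "K = V \<inter> sphere 0 1"
    have "compact K" unfolding K_def using closed_subspace[OF less(2)] by (simp add: closed_Int_compact)
    have "a /\<^sub>R norm a \<in> K" unfolding K_def using a less(2) by (auto simp: subspace_scale)
    then have "K \<noteq> {}" by blast
    have "continuous_on K (\<lambda>x. x \<bullet> (A *v x))"
      by (intro continuous_intros linear_continuous_on matrix_vector_mul_bounded_linear)
    then obtain v where vK: "v \<in> K" and vmax: "\<And>y. y \<in> K \<Longrightarrow> y \<bullet> (A *v y) \<le> v \<bullet> (A *v v)"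
      using continuous_attains_sup[OF \<open>compact K\<close> \<open>K \<noteq> {}\<close>] by blast
    define \<mu> where "\<mu> = v \<bullet> (A *v v)"
    have vV: "v \<in> V" and vn: "v \<bullet> v = 1" using vK unfolding K_def by (auto simp: dot_square_norm)
    have max: "y \<bullet> (A *v y) \<le> \<mu> * (y \<bullet> y)" if "y \<in> V" for y
    proof (cases "y = 0")
      case True then show ?thesis by simp
    next
      case False
      have "y /\<^sub>R norm y \<in> K" unfolding K_def using that False less(2) by (auto simp: subspace_scale)
      then have "(y /\<^sub>R norm y) \<bullet> (A *v (y /\<^sub>R norm y)) \<le> \<mu>" using vmax \<mu>_def by blast
      then have "(y \<bullet> (A *v y)) / (norm y)\<^sup>2 \<le> \<mu>"
        by (simp add: matrix_vector_mult_scaleR power2_eq_square divide_inverse mult_ac)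
      then show ?thesis using False by (simp add: dot_square_norm divide_le_eq)
    qed
    have orth: "w \<bullet> (A *v v) = 0" if "w \<in> V" "w \<bullet> v = 0" for w
    proof -
      have "2 * t * (w \<bullet> (A *v v)) \<le> t\<^sup>2 * (\<mu> * (w \<bullet> w) - w \<bullet> (A *v w))" for t
      proof -
        have "v + t *\<^sub>R w \<in> V" using that vV less(2) by (simp add: subspace_add subspace_scale)
        then have "(v + t *\<^sub>R w) \<bullet> (A *v (v + t *\<^sub>R w)) \<le> \<mu> * ((v + t *\<^sub>R w) \<bullet> (v + t *\<^sub>R w))"
          by (rule max)
        moreover have "v \<bullet> (A *v w) = w \<bullet> (A *v v)"
          using sym_dot[OF sym] by (metis inner_commute)
        ultimately show ?thesis using that vn
          by (simp add: matrix_vector_right_distrib matrix_vector_mult_scaleR inner_add_left inner_add_right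
              \<mu>_def inner_commute[of w v] power2_eq_square algebra_simps)
      qed
      then show ?thesis by (rule real_quad_zero)
    qed
    have eig: "A *v v = \<mu> *\<^sub>R v"
    proof -
      define w where "w = A *v v - \<mu> *\<^sub>R v"
      have wV: "w \<in> V" unfolding w_def using less(3) vV less(2) by (simp add: subspace_diff subspace_scale)
      have "w \<bullet> v = 0" unfolding w_def using vn by (simp add: inner_diff_left inner_diff_right \<mu>_def inner_commute)
      then have "w \<bullet> (A *v v) = 0" using orth wV by blast
      moreover have "w \<bullet> w = w \<bullet> (A *v v - \<mu> *\<^sub>R v)" by (subst (2) w_def) (rule refl)
      ultimately have "w \<bullet> w = 0" using \<open>w \<bullet> v = 0\<close> by (simp add: inner_diff_right)
      then show ?thesis unfolding w_def by simp
    qed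
    define V' where "V' = {x\<in>V. x \<bullet> v = 0}"
    have sV': "subspace V'" unfolding V'_def subspace_def using less(2)
      by (auto simp: subspace_def inner_add_left)
    have iV': "\<forall>x\<in>V'. A *v x \<in> V'"
    proof
      fix x assume "x \<in> V'"
      then have "x \<in> V" "x \<bullet> v = 0" unfolding V'_def by auto
      moreover have "(A *v x) \<bullet> v = x \<bullet> (A *v v)" by (rule sym_dot[OF sym])
      ultimately show "A *v x \<in> V'" unfolding V'_def using less(3) eig
        by (simp add: inner_commute)
    qed
    have "V' \<subseteq> V" "v \<notin> V'" unfolding V'_def using vn by auto
    then have "V' \<subset> V" using vV by blast
    then have "dim V' < dim V"
      using dim_psubset[of V' V] span_eq_iff[THEN iffD2, OF sV'] span_eq_iff[THEN iffD2, OF less(2)] by simp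
    then obtain E' where E': "E' \<subseteq> V'" "pairwise orthogonal E'" "\<forall>x\<in>E'. norm x = 1"
      "\<forall>x\<in>E'. \<exists>c. A *v x = c *\<^sub>R x" "span E' = V'"
      using less(1)[OF _ sV' iV'] by blast
    show ?thesis
    proof (intro exI[of _ "insert v E'"] conjI)
      show "insert v E' \<subseteq> V" using E'(1) vV unfolding V'_def by auto
      show "pairwise orthogonal (insert v E')"
        using E'(1,2) unfolding pairwise_insert V'_def orthogonal_def by (auto simp: inner_commute)
      show "\<forall>x\<in>insert v E'. norm x = 1" using E'(3) vK unfolding K_def by auto
      show "\<forall>x\<in>insert v E'. \<exists>c. A *v x = c *\<^sub>R x" using E'(4) eig by auto
      show "span (insert v E') = V"
      proof
        show "span (insert v E') \<subseteq> V"
          using \<open>insert v E' \<subseteq> V\<close> less(2) by (simp add: span_minimal)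
        show "V \<subseteq> span (insert v E')"
        proof
          fix x assume "x \<in> V"
          define y where "y = x - (x \<bullet> v) *\<^sub>R v"
          have "y \<in> V'" unfolding V'_def y_def using \<open>x \<in> V\<close> vV vn less(2)
            by (simp add: subspace_diff subspace_scale inner_diff_left)
          then have "y \<in> span (insert v E')" using E'(5) by (metis span_mono subset_insertI subsetD)
          moreover have "(x \<bullet> v) *\<^sub>R v \<in> span (insert v E')" by (simp add: span_base span_scale)
          ultimately have "y + (x \<bullet> v) *\<^sub>R v \<in> span (insert v E')" by (rule span_add)
          then show "x \<in> span (insert v E')" unfolding y_def by simp
        qed
      qed
    qed
  qed
qed

lemma dot_transpose:
  fixes A :: "real^'n^'m"
  shows "x \<bullet> (A *v y) = (transpose A *v x) \<bullet> y"
  by (metis dot_lmul_matrix transpose_matrix_vector)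

lemma psd_sym: "psd A \<Longrightarrow> transpose A = A" by (simp add: psd_def)
lemma psd_nonneg: "psd A \<Longrightarrow> 0 \<le> x \<bullet> (A *v x)" by (simp add: psd_def)

lemma psd_null:
  fixes P :: "real^'n^'n"
  assumes "psd P" "x \<bullet> (P *v x) = 0"
  shows "P *v x = 0"
proof -
  have sym: "transpose P = P" using assms(1) by (simp add: psd_def)
  have "y \<bullet> (P *v x) = 0" for y
  proof -
    have "2 * t * (- (y \<bullet> (P *v x))) \<le> t\<^sup>2 * (y \<bullet> (P *v y))" for t
    proof -
      have "0 \<le> (x + t *\<^sub>R y) \<bullet> (P *v (x + t *\<^sub>R y))" using assms(1) by (simp add: psd_def)
      moreover have "x \<bullet> (P *v y) = y \<bullet> (P *v x)" using sym_dot[OF sym] by (metis inner_commute)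
      ultimately show ?thesis using assms(2)
        by (simp add: matrix_vector_right_distrib matrix_vector_mult_scaleR inner_add_left inner_add_right
              power2_eq_square algebra_simps)
    qed
    then have "- (y \<bullet> (P *v x)) = 0" by (rule real_quad_zero)
    then show ?thesis by simp
  qed
  from this[of "P *v x"] show ?thesis by simp
qed

lemma matrix_eq_vec:
  fixes A B :: "real^'n^'m"
  shows "(\<And>x. A *v x = B *v x) \<Longrightarrow> A = B"
  using matrix_eq by blast

definition dmat :: "('n::finite \<Rightarrow> real) \<Rightarrow> real^'n^'n" where
  "dmat d = (\<chi> i j. if i = j then d i else 0)"

lemma dmat_right: "(A ** dmat d) $ i $ j = A $ i $ j * d j"
  by (simp add: dmat_def matrix_matrix_mult_def if_distrib if_distribR sum.delta' cong: if_cong)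

lemma dmat_left: "(dmat d ** A) $ i $ j = d i * A $ i $ j"
  by (simp add: dmat_def matrix_matrix_mult_def if_distrib if_distribR sum.delta cong: if_cong)

lemma dmat_mult: "dmat d ** dmat e = dmat (\<lambda>i. d i * e i)"
  by (simp add: vec_eq_iff dmat_right) (simp add: dmat_def)

lemma transpose_dmat: "transpose (dmat d) = dmat d"
  by (simp add: vec_eq_iff transpose_def dmat_def)

lemma dmat_vec: "(dmat d *v y) $ i = d i * y $ i"
  by (simp add: dmat_def matrix_vector_mult_def if_distrib if_distribR sum.delta cong: if_cong)

lemma dmat_quad:
  assumes "\<And>i. 0 \<le> d i" shows "0 \<le> y \<bullet> (dmat d *v y)"
proof -
  have "0 \<le> y $ i * (d i * y $ i)" for i
    using assms[of i] by (metis mult.left_commute mult_nonneg_nonneg zero_le_square)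
  then show ?thesis unfolding inner_vec_def dmat_vec by (simp add: sum_nonneg)
qed

definition fm :: "real^'n^'n \<Rightarrow> ('n \<Rightarrow> real) \<Rightarrow> real^'n^'n" where
  "fm U d = U ** dmat d ** transpose U"

lemma orth_simps:
  assumes "orthogonal_matrix U"
  shows "transpose U ** U = mat 1" "U ** transpose U = mat 1"
    "transpose U ** (U ** Z) = Z" "U ** (transpose U ** Z) = Z"
  using assms unfolding orthogonal_matrix_def by (simp_all add: matrix_mul_assoc)

lemma fm_mult:
  assumes "orthogonal_matrix U"
  shows "fm U d ** fm U e = fm U (\<lambda>i. d i * e i)"
  by (simp add: orth_simps[OF assms] fm_def matrix_mul_assoc[symmetric] dmat_mult[symmetric])

lemma fm_mult2:
  assumes "orthogonal_matrix U"
  shows "fm U d ** (fm U e ** Z) = fm U (\<lambda>i. d i * e i) ** Z"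
  by (simp add: matrix_mul_assoc fm_mult[OF assms])

lemma fm_transpose: "transpose (fm U d) = fm U d"
  by (simp add: fm_def matrix_transpose_mul transpose_dmat matrix_mul_assoc)

lemma fm_psd:
  assumes "\<And>i. 0 \<le> d i"
  shows "psd (fm U d)"
  unfolding psd_def
proof (intro conjI allI)
  show "transpose (fm U d) = fm U d" by (rule fm_transpose)
  fix x
  have "x \<bullet> (fm U d *v x) = (transpose U *v x) \<bullet> (dmat d *v (transpose U *v x))"
    by (simp add: fm_def matrix_vector_mul_assoc[symmetric] dot_transpose)
  also have "\<dots> \<ge> 0" using assms by (rule dmat_quad)
  finally show "0 \<le> x \<bullet> (fm U d *v x)" .
qed

lemma fm_cong: "(\<And>i. d i = e i) \<Longrightarrow> fm U d = fm U e"
  by (metis ext)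

lemma diag_quad: "K $ i $ i = axis i 1 \<bullet> (K *v axis i (1::real))"
  unfolding inner_axis' by (simp add: inner_axis' matrix_vector_mult_def axis_def if_distrib if_distribR sum.delta' cong: if_cong)

lemma fm_commute:
  assumes U: "orthogonal_matrix U" and c: "X ** fm U d = fm U d ** X"
  shows "X ** fm U (\<lambda>i. f (d i)) = fm U (\<lambda>i. f (d i)) ** X"
proof -
  define X' where "X' = transpose U ** X ** U"
  have XX': "X = U ** X' ** transpose U" unfolding X'_def
    by (simp add: orth_simps[OF U] matrix_mul_assoc[symmetric])
  have "X' ** dmat d = transpose U ** (X ** fm U d) ** U"
    unfolding X'_def fm_def by (simp add: orth_simps[OF U] matrix_mul_assoc[symmetric])
  also have "\<dots> = transpose U ** (fm U d ** X) ** U" by (simp add: c)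
  also have "\<dots> = dmat d ** X'"
    unfolding X'_def fm_def by (simp add: orth_simps[OF U] matrix_mul_assoc[symmetric])
  finally have 1: "X' ** dmat d = dmat d ** X'" .
  have 2: "X' ** dmat (\<lambda>i. f (d i)) = dmat (\<lambda>i. f (d i)) ** X'"
  proof -
    have "X' $ i $ j * f (d j) = f (d i) * X' $ i $ j" for i j
    proof -
      have "X' $ i $ j * d j = d i * X' $ i $ j" using 1 by (metis dmat_left dmat_right)
      then have "X' $ i $ j = 0 \<or> d i = d j" by (auto simp: mult.commute)
      then show ?thesis by auto
    qed
    then show ?thesis by (simp add: vec_eq_iff dmat_left dmat_right)
  qed
  show ?thesis
    unfolding XX' fm_def using 2
    by (simp add: orth_simps[OF U] matrix_mul_assoc[symmetric]) (simp add: matrix_mul_assoc)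
qed

lemma spectral:
  fixes A :: "real^'n^'n"
  assumes sym: "transpose A = A"
  obtains U d where "orthogonal_matrix U" "A = fm U d"
proof -
  obtain E where E: "pairwise orthogonal E" "\<forall>x\<in>E. norm x = 1"
    "\<forall>x\<in>E. \<exists>c. A *v x = c *\<^sub>R x" "span E = UNIV"
    using spectral_aux[OF sym, of UNIV] by auto
  have "0 \<notin> E" using E(2) by auto
  then have ind: "independent E" using E(1) pairwise_orthogonal_independent by blast
  then have fin: "finite E" using finiteI_independent by blast
  have "card E = dim (span E)" using dim_span_eq_card_independent[OF ind] by simp
  then have cE: "card E = CARD('n)" using E(4) by simp
  then obtain f where f: "bij_betw f (UNIV::'n set) E"
    by (metis fin finite_class.finite_UNIV finite_same_card_bij)
  have fE: "f i \<in> E" for i using f by (auto simp: bij_betw_def)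
  have [simp]: "norm (f i) = 1" for i using E(2) fE by blast
  have [simp]: "orthogonal (f i) (f j)" if "i \<noteq> j" for i j
  proof -
    have "inj f" using f by (simp add: bij_betw_def)
    then have "f i \<noteq> f j" using that by (simp add: inj_eq)
    then show ?thesis using E(1) fE unfolding pairwise_def by blast
  qed
  define U where "U = (\<chi> i j. f j $ i)"
  have U: "orthogonal_matrix U"
    unfolding U_def by (simp add: orthogonal_matrix_orthonormal_columns column_def)
  define d where "d j = (SOME c. A *v f j = c *\<^sub>R f j)" for j
  have eig: "A *v f j = d j *\<^sub>R f j" for j
    unfolding d_def by (rule someI_ex) (use E(3) fE in blast)
  have AU: "A ** U = U ** dmat d"
  proof -
    have "(A ** U) $ i $ j = (U ** dmat d) $ i $ j" for i j
    proof -
      have "(A ** U) $ i $ j = (A *v f j) $ i"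
        by (simp add: U_def matrix_matrix_mult_def matrix_vector_mult_def)
      also have "\<dots> = f j $ i * d j" by (simp add: eig)
      finally show ?thesis by (simp add: dmat_right U_def)
    qed
    then show ?thesis by (simp add: vec_eq_iff)
  qed
  have "A = A ** (U ** transpose U)" using U by (simp add: orthogonal_matrix_def)
  also have "\<dots> = fm U d" by (simp add: fm_def matrix_mul_assoc AU)
  finally show ?thesis using U that by blast
qed

lemma fm_diag:
  assumes U: "orthogonal_matrix U"
  shows "transpose U ** fm U d ** U = dmat d"
  by (simp add: fm_def matrix_mul_assoc[symmetric] orth_simps[OF U])

lemma psd_spectral:
  fixes A :: "real^'n^'n"
  assumes "psd A"
  obtains U d where "orthogonal_matrix U" "A = fm U d" "\<And>i. 0 \<le> d i"
proof -
  obtain U d where U: "orthogonal_matrix U" "A = fm U d"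
    using spectral psd_sym[OF assms] by blast
  have "0 \<le> d i" for i
  proof -
    have "d i = (transpose U ** A ** U) $ i $ i" using fm_diag[OF U(1)] U(2) by (simp add: dmat_def)
    also have "\<dots> = axis i 1 \<bullet> ((transpose U ** A ** U) *v axis i 1)" by (rule diag_quad)
    also have "\<dots> = axis i 1 \<bullet> (transpose U *v (A *v (U *v axis i 1)))"
      by (simp add: matrix_vector_mul_assoc matrix_mul_assoc)
    also have "\<dots> = (U *v axis i 1) \<bullet> (A *v (U *v axis i 1))"
      using dot_transpose[of "axis i 1" "transpose U" "A *v (U *v axis i 1)"]
      by (simp only: transpose_transpose)
    also have "\<dots> \<ge> 0" using assms by (rule psd_nonneg)
    finally show ?thesis .
  qed
  then show ?thesis by (rule that[OF U])
qed

lemma sqrt_unique: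
  fixes A X :: "real^'n^'n"
  assumes U: "orthogonal_matrix U" and A: "A = fm U d" and d: "\<And>i. 0 \<le> d i"
    and X: "psd X" "X ** X = A"
  shows "X = fm U (\<lambda>i. sqrt (d i))"
proof -
  define S where "S = fm U (\<lambda>i. sqrt (d i))"
  have S: "psd S" unfolding S_def by (rule fm_psd) (simp add: d)
  have SS: "S ** S = A" unfolding S_def A using d by (simp add: fm_mult[OF U])
  have "X ** A = A ** X" using X(2) by (metis matrix_mul_assoc)
  then have XS: "X ** S = S ** X" unfolding S_def A by (rule fm_commute[OF U])
  have T0: "(X - S) *v y = 0" for y
  proof -
    define z where "z = (X - S) *v y"
    have "X *v z + S *v z = (X ** X) *v y - (X ** S) *v y + ((S ** X) *v y - (S ** S) *v y)"
      unfolding z_def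
      by (simp add: matrix_vector_mult_diff_rdistrib matrix_vector_mult_diff_distrib matrix_vector_mul_assoc)
    also have "\<dots> = 0" using XS X(2) SS by simp
    finally have "X *v z + S *v z = 0" .
    then have "z \<bullet> (X *v z) + z \<bullet> (S *v z) = 0" by (metis inner_add_right inner_zero_right)
    moreover have "0 \<le> z \<bullet> (X *v z)" "0 \<le> z \<bullet> (S *v z)" using X(1) S by (simp_all add: psd_nonneg)
    ultimately have "z \<bullet> (X *v z) = 0" "z \<bullet> (S *v z) = 0" by linarith+
    then have "X *v z = 0" "S *v z = 0" using psd_null X(1) S by blast+
    then have "(X - S) *v z = 0" by (simp add: matrix_vector_mult_diff_rdistrib)
    moreover have "z \<bullet> z = y \<bullet> ((X - S) *v z)"
    proof -
      have "transpose (X - S) = transpose X - transpose S" by (simp add: transpose_def vec_eq_iff)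
      then have tr: "transpose (X - S) = X - S" using psd_sym[OF X(1)] psd_sym[OF S] by simp
      show ?thesis unfolding dot_transpose tr z_def ..
    qed
    ultimately have "z \<bullet> z = 0" by simp
    then show ?thesis unfolding z_def by simp
  qed
  have "X - S = 0" by (rule matrix_eq_vec) (simp add: T0)
  then show ?thesis unfolding S_def by simp
qed

lemma psd_sqrt_fm:
  fixes A :: "real^'n^'n"
  assumes U: "orthogonal_matrix U" and A: "A = fm U d" and d: "\<And>i. 0 \<le> d i"
  shows "psd_sqrt A = fm U (\<lambda>i. sqrt (d i))"
  unfolding psd_sqrt_def
proof (rule the_equality)
  show "psd (fm U (\<lambda>i. sqrt (d i))) \<and> fm U (\<lambda>i. sqrt (d i)) ** fm U (\<lambda>i. sqrt (d i)) = A"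
    using d by (simp add: fm_psd fm_mult[OF U] A)
  show "\<And>X. psd X \<and> X ** X = A \<Longrightarrow> X = fm U (\<lambda>i. sqrt (d i))"
    using sqrt_unique[OF U A d] by blast
qed

lemma pinv_unique:
  fixes A :: "real^'n^'m" and X Y :: "real^'m^'n"
  assumes X: "A ** X ** A = A" "X ** A ** X = X" "transpose (A ** X) = A ** X" "transpose (X ** A) = X ** A"
  assumes Y: "A ** Y ** A = A" "Y ** A ** Y = Y" "transpose (A ** Y) = A ** Y" "transpose (Y ** A) = Y ** A"
  shows "X = Y"
proof -
  have tAYA: "transpose (A ** Y ** A) = transpose A ** transpose (A ** Y)"
    by (simp only: matrix_transpose_mul)
  have tAXA: "transpose (A ** X ** A) = transpose (X ** A) ** transpose A"
    by (simp only: matrix_transpose_mul matrix_mul_assoc)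
  have "X = X ** (A ** X)" using X(2) by (simp only: matrix_mul_assoc)
  also have "\<dots> = X ** transpose (A ** X)" using X(3) by simp
  also have "\<dots> = X ** (transpose X ** transpose A)" by (simp only: matrix_transpose_mul)
  also have "\<dots> = X ** (transpose X ** transpose (A ** Y ** A))" using Y(1) by simp
  also have "\<dots> = X ** ((transpose X ** transpose A) ** transpose (A ** Y))"
    by (simp only: tAYA matrix_mul_assoc)
  also have "\<dots> = X ** (transpose (A ** X) ** transpose (A ** Y))" by (simp only: matrix_transpose_mul)
  also have "\<dots> = (X ** A ** X) ** A ** Y" using X(3) Y(3) by (simp only: matrix_mul_assoc)
  also have "\<dots> = X ** A ** Y" using X(2) by simp
  finally have 1: "X = X ** A ** Y" .
  have "Y = (Y ** A) ** Y" using Y(2) by simp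
  also have "\<dots> = transpose (Y ** A) ** Y" using Y(4) by simp
  also have "\<dots> = (transpose A ** transpose Y) ** Y" by (simp only: matrix_transpose_mul)
  also have "\<dots> = (transpose (A ** X ** A) ** transpose Y) ** Y" using X(1) by simp
  also have "\<dots> = (transpose (X ** A) ** (transpose A ** transpose Y)) ** Y"
    by (simp only: tAXA matrix_mul_assoc)
  also have "\<dots> = (transpose (X ** A) ** transpose (Y ** A)) ** Y" by (simp only: matrix_transpose_mul)
  also have "\<dots> = X ** A ** (Y ** A ** Y)" using X(4) Y(4) by (simp only: matrix_mul_assoc)
  also have "\<dots> = X ** A ** Y" using Y(2) by simp
  finally show ?thesis using 1 by simp
qed

lemma pinv_eq:
  fixes A :: "real^'n^'m" and X :: "real^'m^'n"
  assumes X: "A ** X ** A = A" "X ** A ** X = X" "transpose (A ** X) = A ** X" "transpose (X ** A) = X ** A"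
  shows "pinv A = X"
  unfolding pinv_def
proof (rule the_equality)
  show "A ** X ** A = A \<and> X ** A ** X = X \<and> transpose (A ** X) = A ** X \<and> transpose (X ** A) = X ** A"
    using X by blast
  fix Y assume "A ** Y ** A = A \<and> Y ** A ** Y = Y \<and> transpose (A ** Y) = A ** Y \<and> transpose (Y ** A) = Y ** A"
  then have "X = Y" using pinv_unique[OF X] by blast
  then show "Y = X" by simp
qed

lemma pinv_fm:
  assumes U: "orthogonal_matrix U"
  shows "pinv (fm U d) = fm U (\<lambda>i. inverse (d i))"
proof (rule pinv_eq)
  have e1: "d i * inverse (d i) * d i = d i" for i by (cases "d i = 0") auto
  have e2: "inverse (d i) * d i * inverse (d i) = inverse (d i)" for i by (cases "d i = 0") auto
  show "fm U d ** fm U (\<lambda>i. inverse (d i)) ** fm U d = fm U d"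
    by (simp add: fm_mult[OF U] e1)
  show "fm U (\<lambda>i. inverse (d i)) ** fm U d ** fm U (\<lambda>i. inverse (d i)) = fm U (\<lambda>i. inverse (d i))"
    by (simp add: fm_mult[OF U] e2)
  show "transpose (fm U d ** fm U (\<lambda>i. inverse (d i))) = fm U d ** fm U (\<lambda>i. inverse (d i))"
    by (simp add: fm_mult[OF U] fm_transpose)
  show "transpose (fm U (\<lambda>i. inverse (d i)) ** fm U d) = fm U (\<lambda>i. inverse (d i)) ** fm U d"
    by (simp add: fm_mult[OF U] fm_transpose)
qed

lemma psd_pinv:
  fixes A :: "real^'n^'n"
  assumes "psd A"
  shows "psd (pinv A)" "A ** pinv A = pinv A ** A" "A ** pinv A ** A = A" "pinv A ** A ** pinv A = pinv A"
proof -
  obtain U d where U: "orthogonal_matrix U" "A = fm U d" "\<And>i. 0 \<le> d i"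
    using psd_spectral[OF assms] by blast
  have p: "pinv (fm U d) = fm U (\<lambda>i. inverse (d i))" by (rule pinv_fm[OF U(1)])
  have e1: "d i * inverse (d i) * d i = d i" for i by (cases "d i = 0") auto
  have e2: "inverse (d i) * d i * inverse (d i) = inverse (d i)" for i by (cases "d i = 0") auto
  show "psd (pinv A)" unfolding U(2) p by (rule fm_psd) (simp add: U(3))
  show "A ** pinv A = pinv A ** A" unfolding U(2) p by (simp add: fm_mult[OF U(1)] mult.commute)
  show "A ** pinv A ** A = A" unfolding U(2) p by (simp add: fm_mult[OF U(1)] e1)
  show "pinv A ** A ** pinv A = pinv A" unfolding U(2) p by (simp add: fm_mult[OF U(1)] e2)
qed

lemma sqrt_facts:
  fixes A :: "real^'n^'n"
  assumes "psd A"
  shows "psd (psd_sqrt A)" "psd_sqrt A ** psd_sqrt A = A"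
    "pinv (psd_sqrt A) ** pinv (psd_sqrt A) = pinv A"
    "psd_sqrt A ** pinv (psd_sqrt A) = A ** pinv A"
proof -
  obtain U d where U: "orthogonal_matrix U" "A = fm U d" "\<And>i. 0 \<le> d i"
    using psd_spectral[OF assms] by blast
  have s: "psd_sqrt A = fm U (\<lambda>i. sqrt (d i))" using psd_sqrt_fm[OF U] .
  have p: "pinv A = fm U (\<lambda>i. inverse (d i))" unfolding U(2) by (rule pinv_fm[OF U(1)])
  have ps: "pinv (psd_sqrt A) = fm U (\<lambda>i. inverse (sqrt (d i)))" unfolding s by (rule pinv_fm[OF U(1)])
  show "psd (psd_sqrt A)" unfolding s by (rule fm_psd) (simp add: U(3))
  have e0: "sqrt (d i) * sqrt (d i) = d i" for i using U(3)[of i] by simp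
  have "psd_sqrt A ** psd_sqrt A = fm U d" unfolding s by (simp add: fm_mult[OF U(1)] abs_of_nonneg U(3))
  then show "psd_sqrt A ** psd_sqrt A = A" using U(2) by simp
  have e1: "inverse (sqrt (d i)) * inverse (sqrt (d i)) = inverse (d i)" for i
    using e0[of i] by (metis inverse_mult_distrib)
  show "pinv (psd_sqrt A) ** pinv (psd_sqrt A) = pinv A" unfolding ps p by (simp add: fm_mult[OF U(1)] e1)
  have e2: "sqrt (d i) * inverse (sqrt (d i)) = d i * inverse (d i)" for i by (cases "d i = 0") auto
  have "psd_sqrt A ** pinv (psd_sqrt A) = fm U d ** pinv A" unfolding ps unfolding p s by (simp add: fm_mult[OF U(1)] e2)
  then show "psd_sqrt A ** pinv (psd_sqrt A) = A ** pinv A" using U(2) by simp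
qed

lemma psd_congr:
  fixes M :: "real^'n^'n" and B :: "real^'m^'n"
  assumes "psd M"
  shows "psd (transpose B ** M ** B)"
  unfolding psd_def
proof (intro conjI allI)
  show "transpose (transpose B ** M ** B) = transpose B ** M ** B"
    using psd_sym[OF assms] by (simp add: matrix_transpose_mul matrix_mul_assoc)
  fix x
  have "x \<bullet> ((transpose B ** M ** B) *v x) = (B *v x) \<bullet> (M *v (B *v x))"
    using dot_transpose[of x "transpose B" "M *v (B *v x)"]
    by (simp only: transpose_transpose matrix_vector_mul_assoc matrix_mul_assoc)
  then show "0 \<le> x \<bullet> ((transpose B ** M ** B) *v x)" using psd_nonneg[OF assms] by simp
qed

lemma psd_congr_sym:
  fixes M B :: "real^'n^'n"
  assumes "psd M" "transpose B = B"
  shows "psd (B ** M ** B)"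
  using psd_congr[OF assms(1), of B] assms(2) by simp

lemma trace_transpose: "trace (transpose A) = trace (A :: real^'n^'n)"
  by (simp add: trace_def transpose_def)

lemma trace_scaleR: "trace (c *\<^sub>R A) = c * trace (A :: real^'n^'n)"
  by (simp add: trace_def sum_distrib_left)

lemma trace_psd_nonneg:
  fixes K :: "real^'n^'n"
  assumes "psd K" shows "0 \<le> trace K"
  unfolding trace_def
proof (rule sum_nonneg)
  fix i
  show "0 \<le> K $ i $ i" unfolding diag_quad by (rule psd_nonneg[OF assms])
qed

lemma trace_psd_prod:
  fixes S C :: "real^'n^'n"
  assumes "psd S" "psd C"
  shows "0 \<le> trace (S ** C)"
proof -
  define R where "R = psd_sqrt S"
  have R: "psd R" "R ** R = S" unfolding R_def using sqrt_facts[OF assms(1)] by auto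
  have "trace (S ** C) = trace (R ** (R ** C))" using R(2) by (simp add: matrix_mul_assoc)
  also have "\<dots> = trace (R ** C ** R)" by (rule trace_mul_sym)
  also have "\<dots> \<ge> 0" using psd_congr_sym[OF assms(2) psd_sym[OF R(1)]] by (rule trace_psd_nonneg)
  finally show ?thesis .
qed

lemma matrix_sub_ldistrib: "(A :: real^'n^'m) ** (B - C) = A ** B - A ** C"
  by (simp add: matrix_matrix_mult_def vec_eq_iff sum_subtractf right_diff_distrib)

lemma matrix_sub_rdistrib: "((A :: real^'n^'m) - B) ** C = A ** C - B ** C"
  by (simp add: matrix_matrix_mult_def vec_eq_iff sum_subtractf left_diff_distrib)

lemma transpose_sub: "transpose ((A :: real^'n^'m) - B) = transpose A - transpose B"
  by (simp add: transpose_def vec_eq_iff)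

lemma tail: "A ** B = C \<Longrightarrow> A ** (B ** W) = C ** W"
  by (simp add: matrix_mul_assoc)

lemma psd_cs:
  fixes Q :: "real^'n^'n"
  assumes "psd Q"
  shows "(a \<bullet> (Q *v b))\<^sup>2 \<le> (a \<bullet> (Q *v a)) * (b \<bullet> (Q *v b))"
proof -
  define T where "T = psd_sqrt Q"
  have T: "psd T" "T ** T = Q" unfolding T_def using sqrt_facts[OF assms] by auto
  have e: "x \<bullet> (Q *v y) = (T *v x) \<bullet> (T *v y)" for x y
  proof -
    have "x \<bullet> (Q *v y) = x \<bullet> (T *v (T *v y))" using T(2) by (simp add: matrix_vector_mul_assoc)
    also have "\<dots> = (transpose T *v x) \<bullet> (T *v y)" by (rule dot_transpose)
    finally show ?thesis using psd_sym[OF T(1)] by simp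
  qed
  have "\<bar>(T *v a) \<bullet> (T *v b)\<bar> \<le> norm (T *v a) * norm (T *v b)" by (rule Cauchy_Schwarz_ineq2)
  then have "((T *v a) \<bullet> (T *v b))\<^sup>2 \<le> (norm (T *v a) * norm (T *v b))\<^sup>2"
    by (metis abs_ge_zero power2_abs power_mono)
  also have "\<dots> = ((T *v a) \<bullet> (T *v a)) * ((T *v b) \<bullet> (T *v b))"
    by (simp add: power_mult_distrib dot_square_norm)
  finally show ?thesis unfolding e .
qed

lemma weak_duality:
  fixes Q M B S S' P :: "real^'n^'n"
  assumes Q: "psd Q" and M: "psd M" and B: "transpose B = B"
    and S: "psd S" and S': "psd S'" and SS: "S' ** S ** S' = S'" and BM: "B ** M = S ** S' ** B ** M"
    and D: "psd (Q - P ** pinv M ** transpose P)" and PM: "transpose P = M ** pinv M ** transpose P"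
  shows "trace (2 *\<^sub>R (P ** B)) \<le> trace (Q ** S) + trace (M ** (B ** S' ** B))"
proof -
  define Mp where "Mp = pinv M"
  have Mp: "psd Mp" "M ** Mp = Mp ** M" "M ** Mp ** M = M" unfolding Mp_def using psd_pinv[OF M] by auto
  have sQ: "transpose Q = Q" and sM: "transpose M = M" and sS: "transpose S = S" and sS': "transpose S' = S'"
    and sMp: "transpose Mp = Mp"
    using Q M S S' Mp(1) by (simp_all add: psd_sym)
  define K where "K = M ** B ** S'"
  have tK: "transpose K = S' ** B ** M"
    unfolding K_def by (simp add: matrix_transpose_mul sM B sS' matrix_mul_assoc)
  define W where "W = transpose P - K"
  define C where "C = transpose W ** Mp ** W"
  have psdC: "psd C" unfolding C_def using psd_congr[OF Mp(1)] .
  have h1: "0 \<le> trace (S ** (Q - P ** Mp ** transpose P))" using trace_psd_prod[OF S D] Mp_def by simp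
  have h2: "0 \<le> trace (S ** C)" using trace_psd_prod[OF S psdC] .
  have PMpM: "P ** Mp ** M = P"
  proof -
    have "P = transpose (transpose P)" by simp
    also have "\<dots> = transpose (M ** Mp ** transpose P)" using PM Mp_def by simp
    also have "\<dots> = P ** Mp ** M" by (simp add: matrix_transpose_mul sM sMp matrix_mul_assoc)
    finally show ?thesis by simp
  qed
  have MBSS: "M ** B ** S' ** S = M ** B"
  proof -
    have "M ** B = transpose (B ** M)" by (simp add: matrix_transpose_mul sM B)
    also have "\<dots> = transpose (S ** S' ** B ** M)" using BM by simp
    also have "\<dots> = M ** B ** S' ** S" by (simp add: matrix_transpose_mul sM B sS sS' matrix_mul_assoc)
    finally show ?thesis by simp
  qed
  have eC: "trace (S ** C) = trace (S ** (P ** Mp ** transpose P)) - trace (S ** (P ** Mp ** K))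
      - trace (S ** (transpose K ** Mp ** transpose P)) + trace (S ** (transpose K ** Mp ** K))"
    unfolding C_def W_def
    by (simp add: transpose_sub matrix_sub_ldistrib matrix_sub_rdistrib trace_sub trace_add)
  have t2: "trace (S ** (P ** Mp ** K)) = trace (P ** B)"
  proof -
    have "trace (S ** (P ** Mp ** K)) = trace ((P ** Mp ** K) ** S)" by (rule trace_mul_sym)
    also have "(P ** Mp ** K) ** S = (P ** Mp) ** (M ** B ** S' ** S)" unfolding K_def by (simp add: matrix_mul_assoc)
    also have "\<dots> = (P ** Mp ** M) ** B" using MBSS by (simp add: matrix_mul_assoc)
    also have "\<dots> = P ** B" using PMpM by simp
    finally show ?thesis .
  qed
  have t3: "trace (S ** (transpose K ** Mp ** transpose P)) = trace (P ** B)"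
  proof -
    have "trace (S ** (transpose K ** Mp ** transpose P)) = trace (transpose (S ** (transpose K ** Mp ** transpose P)))"
      by (simp add: trace_transpose)
    also have "transpose (S ** (transpose K ** Mp ** transpose P)) = P ** Mp ** K ** S"
      by (simp add: matrix_transpose_mul sMp sS matrix_mul_assoc)
    also have "trace (P ** Mp ** K ** S) = trace (S ** (P ** Mp ** K))" by (simp add: matrix_mul_assoc trace_mul_sym[of _ S])
    finally show ?thesis using t2 by simp
  qed
  have t4: "trace (S ** (transpose K ** Mp ** K)) = trace (M ** (B ** S' ** B))"
  proof -
    have "S ** (transpose K ** Mp ** K) = (S ** S' ** B) ** (M ** Mp ** M) ** (B ** S')"
      unfolding tK unfolding K_def by (simp add: matrix_mul_assoc)
    also have "\<dots> = (S ** S' ** B ** M ** B) ** S'" using Mp(3) by (simp add: matrix_mul_assoc)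
    finally have "trace (S ** (transpose K ** Mp ** K)) = trace ((S ** S' ** B ** M ** B) ** S')" by simp
    also have "\<dots> = trace (S' ** (S ** S' ** B ** M ** B))" by (rule trace_mul_sym)
    also have "S' ** (S ** S' ** B ** M ** B) = (S' ** S ** S') ** (B ** M ** B)" by (simp add: matrix_mul_assoc)
    also have "\<dots> = S' ** (B ** M ** B)" using SS by simp
    also have "trace (S' ** (B ** M ** B)) = trace ((S' ** B) ** (M ** B))" by (simp add: matrix_mul_assoc)
    also have "\<dots> = trace ((M ** B) ** (S' ** B))" by (rule trace_mul_sym)
    also have "\<dots> = trace (M ** (B ** S' ** B))" by (simp add: matrix_mul_assoc)
    finally show ?thesis .
  qed
  have eD: "trace (S ** (Q - P ** Mp ** transpose P)) = trace (Q ** S) - trace (S ** (P ** Mp ** transpose P))"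
    by (simp add: matrix_sub_ldistrib trace_sub trace_mul_sym[of S Q])
  have "trace (2 *\<^sub>R (P ** B)) = 2 * trace (P ** B)" by (rule trace_scaleR)
  then show ?thesis using h1 h2 eC t2 t3 t4 eD by linarith
qed

theorem theorem6:
  fixes Q M B :: "real^'n^'n"
  assumes "psd Q" and "psd M" and "psd B"
    and "col_space (B ** M ** B) \<subseteq> col_space Q"
  defines "R \<equiv> psd_sqrt (B ** M ** B)"
    and "\<Omega> \<equiv> {P :: real^'n^'n. psd (Q - P ** pinv M ** transpose P)
                 \<and> transpose P = M ** pinv M ** transpose P}"
    and "\<S> \<equiv> {(S :: real^'n^'n, S' :: real^'n^'n). psd S \<and> psd S'
                 \<and> S ** S' ** S = S \<and> S' ** S ** S' = S' \<and> B ** M = S ** S' ** B ** M}"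
    and "J \<equiv> (\<lambda>(S :: real^'n^'n, S' :: real^'n^'n). trace (Q ** S) + trace (M ** (B ** S' ** B)))"
  shows "(2 * trace (psd_sqrt (R ** Q ** R)) \<in> J ` \<S> \<and> (\<forall>z\<in>J ` \<S>. 2 * trace (psd_sqrt (R ** Q ** R)) \<le> z))
    \<and> (2 * trace (psd_sqrt (R ** Q ** R)) \<in> (\<lambda>P. trace (2 *\<^sub>R (P ** B))) ` \<Omega>
       \<and> (\<forall>z\<in>(\<lambda>P. trace (2 *\<^sub>R (P ** B))) ` \<Omega>. z \<le> 2 * trace (psd_sqrt (R ** Q ** R))))
    \<and> ((R ** pinv (psd_sqrt (R ** Q ** R)) ** R, pinv R ** psd_sqrt (R ** Q ** R) ** pinv R) \<in> \<S>)
    \<and> (J (R ** pinv (psd_sqrt (R ** Q ** R)) ** R, pinv R ** psd_sqrt (R ** Q ** R) ** pinv R)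
           = 2 * trace (psd_sqrt (R ** Q ** R)))
    \<and> (Q ** (R ** pinv (psd_sqrt (R ** Q ** R)) ** R) ** pinv (B ** M ** B) ** B ** M
           = Q ** R ** pinv (psd_sqrt (R ** Q ** R)) ** pinv R ** B ** M)
    \<and> (Q ** (R ** pinv (psd_sqrt (R ** Q ** R)) ** R) ** pinv (B ** M ** B) ** B ** M \<in> \<Omega>)
    \<and> (trace (2 *\<^sub>R (Q ** (R ** pinv (psd_sqrt (R ** Q ** R)) ** R) ** pinv (B ** M ** B) ** B ** M ** B))
           = 2 * trace (psd_sqrt (R ** Q ** R)))"
proof -
  have sQ: "transpose Q = Q" and sM: "transpose M = M" and sB: "transpose B = B"
    using assms(1-3) by (simp_all add: psd_sym)
  define Y where "Y = B ** M ** B"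
  have psdY: "psd Y" unfolding Y_def using psd_congr_sym[OF assms(2) sB] .
  have RY: "R = psd_sqrt Y" unfolding R_def Y_def ..
  have psdR: "psd R" and RR: "R ** R = Y" and RpRp: "pinv R ** pinv R = pinv Y"
    and RRp: "R ** pinv R = Y ** pinv Y" using sqrt_facts[OF psdY] RY by auto
  define Rp where "Rp = pinv R"
  define Yp where "Yp = pinv Y"
  have psdRp: "psd Rp" and cR: "R ** Rp = Rp ** R" and R3: "R ** Rp ** R = R" and Rp3: "Rp ** R ** Rp = Rp"
    unfolding Rp_def using psd_pinv[OF psdR] by auto
  have cY: "Y ** Yp = Yp ** Y" and Y3: "Y ** Yp ** Y = Y"
    unfolding Yp_def using psd_pinv[OF psdY] by auto
  define Z where "Z = R ** Q ** R"
  have sR: "transpose R = R" using psdR by (simp add: psd_sym)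
  have sRp: "transpose Rp = Rp" using psdRp by (simp add: psd_sym)
  have psdZ: "psd Z" unfolding Z_def using psd_congr_sym[OF assms(1) sR] .
  define X where "X = psd_sqrt Z"
  have psdX: "psd X" and XX: "X ** X = Z" unfolding X_def using sqrt_facts[OF psdZ] by auto
  define Xp where "Xp = pinv X"
  have psdXp: "psd Xp" and cX: "X ** Xp = Xp ** X" and X3: "X ** Xp ** X = X" and Xp3: "Xp ** X ** Xp = Xp"
    unfolding Xp_def using psd_pinv[OF psdX] by auto
  define Mp where "Mp = pinv M"
  have psdMp: "psd Mp" and M3: "M ** Mp ** M = M" unfolding Mp_def using psd_pinv[OF assms(2)] by auto
  have sX: "transpose X = X" using psdX by (simp add: psd_sym)
  have sXp: "transpose Xp = Xp" using psdXp by (simp add: psd_sym)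
  have sMp: "transpose Mp = Mp" using psdMp by (simp add: psd_sym)
  define Pr where "Pr = R ** Rp"
  have sPr: "transpose Pr = Pr" unfolding Pr_def by (simp add: matrix_transpose_mul sR sRp cR)
  have a1: "R ** Rp = Pr" unfolding Pr_def ..
  have a2: "Rp ** R = Pr" unfolding Pr_def using cR by simp
  have a3: "Pr ** R = R" unfolding Pr_def using R3 .
  have a4: "R ** Pr = R" unfolding Pr_def using R3 cR by (metis matrix_mul_assoc)
  have a5: "Rp ** Pr = Rp" unfolding Pr_def using Rp3 by (simp add: matrix_mul_assoc)
  have a6: "Pr ** Rp = Rp" unfolding Pr_def using Rp3 cR by simp
  have a7: "Y ** Yp = Pr" unfolding Pr_def Yp_def Rp_def using RRp by simp
  have a8: "Yp ** Y = Pr" using a7 cY by simp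
  have a9: "Yp = Rp ** Rp" unfolding Yp_def Rp_def using RpRp by simp
  have a17: "Pr ** Pr = Pr" using a3 by (simp add: Pr_def matrix_mul_assoc)
  have XZ: "X = R ** (Q ** (R ** Xp))"
  proof -
    have "X = X ** (Xp ** X)" using X3 by (simp add: matrix_mul_assoc)
    also have "\<dots> = (X ** X) ** Xp" using cX by (simp add: matrix_mul_assoc[symmetric])
    also have "\<dots> = R ** (Q ** (R ** Xp))" using XX by (simp add: Z_def matrix_mul_assoc)
    finally show ?thesis .
  qed
  have PrX: "Pr ** X = X"
  proof -
    have "Pr ** X = (Pr ** R) ** (Q ** (R ** Xp))" by (subst XZ) (simp add: matrix_mul_assoc)
    also have "\<dots> = X" using a3 XZ by simp
    finally show ?thesis .
  qed
  have K1a: "(X ** Xp) ** R = R"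
  proof (rule matrix_eq_vec)
    fix x
    define PX where "PX = X ** Xp"
    have sPX: "transpose PX = PX" unfolding PX_def by (simp add: matrix_transpose_mul sX sXp cX)
    have PXPX: "PX ** PX = PX" unfolding PX_def using X3 by (simp add: matrix_mul_assoc)
    have XPX: "X ** PX = X" unfolding PX_def using X3 cX by (metis matrix_mul_assoc)
    define w where "w = R *v x - PX *v (R *v x)"
    have Xw: "X *v w = 0" unfolding w_def
      by (simp add: matrix_vector_mult_diff_distrib matrix_vector_mul_assoc matrix_mul_assoc XPX)
    have Zw: "Z *v w = 0" using Xw XX by (metis matrix_vector_mul_assoc matrix_vector_mult_0_right)
    have "w \<bullet> (Z *v w) = (R *v w) \<bullet> (Q *v (R *v w))"
      unfolding Z_def by (simp add: matrix_vector_mul_assoc[symmetric] sym_dot[OF sR])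
    then have "(R *v w) \<bullet> (Q *v (R *v w)) = 0" using Zw by simp
    then have QRw: "Q *v (R *v w) = 0" using psd_null[OF assms(1)] by blast
    have YRp: "Y ** Rp = R" using a4 RR by (metis Pr_def matrix_mul_assoc)
    have "R *v w = Y *v (Rp *v w)" using YRp by (simp add: matrix_vector_mul_assoc)
    then have "R *v w \<in> col_space (B ** M ** B)" unfolding col_space_def Y_def by blast
    then obtain u where u: "R *v w = Q *v u" using assms(4) unfolding col_space_def by blast
    have "(Q *v u) \<bullet> (Q *v u) = u \<bullet> (Q *v (Q *v u))" by (simp add: sym_dot[OF sQ])
    also have "\<dots> = 0" using QRw u by simp
    finally have Rw: "R *v w = 0" using u by simp
    have PXw: "PX *v w = 0" unfolding w_def
      by (simp add: matrix_vector_mult_diff_distrib matrix_vector_mul_assoc matrix_mul_assoc PXPX)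
    have "w \<bullet> w = w \<bullet> (R *v x) - w \<bullet> (PX *v (R *v x))"
      by (simp add: w_def inner_diff_right)
    also have "w \<bullet> (R *v x) = (R *v w) \<bullet> x" by (simp add: sym_dot[OF sR])
    also have "w \<bullet> (PX *v (R *v x)) = (PX *v w) \<bullet> (R *v x)" by (simp add: sym_dot[OF sPX])
    finally have "w \<bullet> w = 0" using Rw PXw by simp
    then have "w = 0" by simp
    then show "((X ** Xp) ** R) *v x = R *v x"
      unfolding w_def PX_def by (simp add: matrix_vector_mul_assoc[symmetric])
  qed
  have K1: "X ** Xp = Pr"
  proof -
    have PXP: "(X ** Xp) ** Pr = Pr" unfolding Pr_def using K1a by (metis matrix_mul_assoc)
    have PPX: "Pr ** (X ** Xp) = X ** Xp" using PrX by (simp add: matrix_mul_assoc)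
    have "Pr = transpose ((X ** Xp) ** Pr)" using PXP sPr by simp
    also have "\<dots> = Pr ** (X ** Xp)" by (simp add: matrix_transpose_mul sPr sX sXp cX)
    finally show ?thesis using PPX by simp
  qed
  have K2: "Pr ** (B ** M) = B ** M"
  proof (rule matrix_eq_vec)
    fix x
    define v where "v = (B ** M) *v x"
    define w where "w = v - Pr *v v"
    have YP: "Y ** Pr = Y" using a7 Y3 by (metis matrix_mul_assoc cY)
    have Yw: "Y *v w = 0" unfolding w_def
      by (simp add: matrix_vector_mult_diff_distrib matrix_vector_mul_assoc matrix_mul_assoc YP)
    have "w \<bullet> (Y *v w) = (B *v w) \<bullet> (M *v (B *v w))"
      unfolding Y_def by (simp add: matrix_vector_mul_assoc[symmetric] sym_dot[OF sB])
    then have "(B *v w) \<bullet> (M *v (B *v w)) = 0" using Yw by simp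
    then have MBw: "M *v (B *v w) = 0" using psd_null[OF assms(2)] by blast
    have Pw: "Pr *v w = 0" unfolding w_def
      by (simp add: matrix_vector_mult_diff_distrib matrix_vector_mul_assoc matrix_mul_assoc a17)
    have "w \<bullet> w = w \<bullet> v - w \<bullet> (Pr *v v)" by (simp add: w_def inner_diff_right)
    also have "w \<bullet> v = (M *v (B *v w)) \<bullet> x"
      unfolding v_def by (simp add: matrix_vector_mul_assoc[symmetric] sym_dot[OF sB] sym_dot[OF sM])
    also have "w \<bullet> (Pr *v v) = (Pr *v w) \<bullet> v" by (simp add: sym_dot[OF sPr])
    finally have "w \<bullet> w = 0" using MBw Pw by simp
    then have "w = 0" by simp
    then show "(Pr ** (B ** M)) *v x = (B ** M) *v x"
      unfolding w_def v_def by (simp add: matrix_vector_mul_assoc[symmetric])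
  qed
  have a12: "Xp ** X = Pr" using K1 cX by simp
  have a13: "X ** Pr = X" using X3 a12 by (simp add: matrix_mul_assoc[symmetric])
  have a15: "Xp ** Pr = Xp" using Xp3 K1 by (metis matrix_mul_assoc)
  have a16: "Pr ** Xp = Xp" using Xp3 a12 by simp
  have BMB: "B ** (M ** B) = R ** R" using RR Y_def by (simp add: matrix_mul_assoc)
  have M3': "M ** (Mp ** M) = M" using M3 by (simp add: matrix_mul_assoc)
  note N = a1 tail[OF a1] a2 tail[OF a2] a3 tail[OF a3] a4 tail[OF a4] a5 tail[OF a5]
    a6 tail[OF a6] a17 tail[OF a17] K1 tail[OF K1] a12 tail[OF a12] a13 tail[OF a13]
    PrX tail[OF PrX] a15 tail[OF a15] a16 tail[OF a16]
    K2 tail[OF K2, unfolded matrix_mul_assoc[symmetric]]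
    BMB tail[OF BMB, unfolded matrix_mul_assoc[symmetric]]
    M3' tail[OF M3', unfolded matrix_mul_assoc[symmetric]]
    matrix_mul_assoc[symmetric]
  define S1 where "S1 = R ** Xp ** R"
  define S2 where "S2 = Rp ** X ** Rp"
  have psdS1: "psd S1" unfolding S1_def using psd_congr_sym[OF psdXp sR] .
  have psdS2: "psd S2" unfolding S2_def using psd_congr_sym[OF psdX sRp] .
  have S121: "S1 ** S2 ** S1 = S1" unfolding S1_def S2_def by (simp add: N)
  have S212: "S2 ** S1 ** S2 = S2" unfolding S1_def S2_def by (simp add: N)
  have BMS: "B ** M = S1 ** S2 ** B ** M" unfolding S1_def S2_def by (simp add: N)
  have memS: "(S1, S2) \<in> \<S>" unfolding \<S>_def using psdS1 psdS2 S121 S212 BMS by simp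
  have trQS1: "trace (Q ** S1) = trace X"
  proof -
    have "trace (Q ** S1) = trace ((Q ** R ** Xp) ** R)" unfolding S1_def by (simp add: matrix_mul_assoc)
    also have "\<dots> = trace (R ** (Q ** R ** Xp))" by (rule trace_mul_sym)
    also have "R ** (Q ** R ** Xp) = (X ** X) ** Xp" using XX by (simp add: Z_def matrix_mul_assoc)
    also have "\<dots> = X" by (simp add: N)
    finally show ?thesis .
  qed
  have trS2: "trace (M ** (B ** S2 ** B)) = trace X"
  proof -
    have "trace (M ** (B ** S2 ** B)) = trace ((M ** B ** Rp ** X) ** (Rp ** B))"
      unfolding S2_def by (simp add: matrix_mul_assoc)
    also have "\<dots> = trace ((Rp ** B) ** (M ** B ** Rp ** X))" by (rule trace_mul_sym)
    also have "(Rp ** B) ** (M ** B ** Rp ** X) = X" by (simp add: N)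
    finally show ?thesis .
  qed
  have J1: "J (S1, S2) = 2 * trace X" unfolding J_def using trQS1 trS2 by simp
  define Pi where "Pi = Q ** R ** Xp ** Rp ** B ** M"
  have G3: "Q ** S1 ** Yp ** B ** M = Pi" unfolding S1_def Pi_def a9 by (simp add: N)
  have tPi: "transpose Pi = M ** B ** Rp ** Xp ** R ** Q"
    unfolding Pi_def by (simp add: matrix_transpose_mul sQ sR sRp sXp sB sM matrix_mul_assoc)
  have KK: "Pi ** Mp ** transpose Pi = Q ** R ** Xp ** Xp ** R ** Q"
    unfolding tPi unfolding Pi_def by (simp add: N)
  have PiO: "Pi \<in> \<Omega>"
  proof -
    have c1: "transpose Pi = M ** Mp ** transpose Pi" unfolding tPi by (simp add: N)
    have c2: "psd (Q - Pi ** Mp ** transpose Pi)"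
      unfolding psd_def
    proof (intro conjI allI)
      show "transpose (Q - Pi ** Mp ** transpose Pi) = Q - Pi ** Mp ** transpose Pi"
        unfolding KK by (simp add: transpose_sub matrix_transpose_mul sQ sR sXp matrix_mul_assoc)
      fix x
      define v where "v = Xp *v (R *v (Q *v x))"
      define a where "a = R *v (Xp *v v)"
      have e1: "x \<bullet> ((Pi ** Mp ** transpose Pi) *v x) = v \<bullet> v"
      proof -
        have "x \<bullet> ((Pi ** Mp ** transpose Pi) *v x) = x \<bullet> (Q *v (R *v (Xp *v v)))"
          unfolding KK v_def by (simp add: matrix_vector_mul_assoc matrix_mul_assoc)
        also have "\<dots> = v \<bullet> v" unfolding v_def by (simp add: sym_dot[OF sQ, symmetric] sym_dot[OF sR, symmetric] sym_dot[OF sXp, symmetric])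
        finally show ?thesis .
      qed
      have Pv: "Pr *v v = v" unfolding v_def by (simp add: matrix_vector_mul_assoc matrix_mul_assoc a16)
      have e2: "a \<bullet> (Q *v a) = v \<bullet> v"
      proof -
        define y where "y = Xp *v v"
        have "a \<bullet> (Q *v a) = y \<bullet> (R *v (Q *v (R *v y)))"
          unfolding a_def y_def by (rule sym_dot[OF sR])
        also have "R *v (Q *v (R *v y)) = X *v (X *v y)"
          using XX unfolding Z_def by (simp add: matrix_vector_mul_assoc matrix_mul_assoc)
        also have "y \<bullet> (X *v (X *v y)) = (X *v y) \<bullet> (X *v y)"
          by (rule sym_dot[OF sX, symmetric])
        also have "X *v y = v" unfolding y_def using Pv K1 by (simp add: matrix_vector_mul_assoc)
        finally show ?thesis .
      qed
      have e3: "a \<bullet> (Q *v x) = v \<bullet> v"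
      proof -
        have "a \<bullet> (Q *v x) = (Xp *v v) \<bullet> (R *v (Q *v x))" unfolding a_def by (rule sym_dot[OF sR])
        also have "\<dots> = v \<bullet> (Xp *v (R *v (Q *v x)))" by (rule sym_dot[OF sXp])
        finally show ?thesis unfolding v_def .
      qed
      have cs: "(v \<bullet> v)\<^sup>2 \<le> (v \<bullet> v) * (x \<bullet> (Q *v x))"
        using psd_cs[OF assms(1), of a x] e2 e3 by simp
      have qx: "0 \<le> x \<bullet> (Q *v x)" using psd_nonneg[OF assms(1)] .
      have vq: "v \<bullet> v \<le> x \<bullet> (Q *v x)"
      proof (cases "v \<bullet> v = 0")
        case True then show ?thesis using qx by simp
      next
        case False
        then have "0 < v \<bullet> v" by simp
        moreover have "(v \<bullet> v) * (v \<bullet> v) \<le> (v \<bullet> v) * (x \<bullet> (Q *v x))" using cs by (simp add: power2_eq_square)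
        ultimately show ?thesis by simp
      qed
      show "0 \<le> x \<bullet> ((Q - Pi ** Mp ** transpose Pi) *v x)"
        using vq e1 by (simp add: matrix_vector_mult_diff_rdistrib inner_diff_right)
    qed
    show ?thesis unfolding \<Omega>_def Mp_def[symmetric] using c1 c2 by simp
  qed
  have trPi: "trace (2 *\<^sub>R (Pi ** B)) = 2 * trace X"
  proof -
    have "Pi ** B = Q ** S1" unfolding Pi_def S1_def by (simp add: N)
    then show ?thesis using trQS1 by (simp add: trace_scaleR)
  qed
  have lower: "\<forall>z\<in>J ` \<S>. 2 * trace X \<le> z"
  proof
    fix z assume "z \<in> J ` \<S>"
    then obtain S S' where SS: "(S, S') \<in> \<S>" and z: "z = J (S, S')" by auto
    have h: "psd S" "psd S'" "S' ** S ** S' = S'" "B ** M = S ** S' ** B ** M"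
      using SS unfolding \<S>_def by auto
    have "Pi \<in> \<Omega>" by (rule PiO)
    then have o: "psd (Q - Pi ** pinv M ** transpose Pi)" "transpose Pi = M ** pinv M ** transpose Pi"
      unfolding \<Omega>_def by auto
    have "trace (2 *\<^sub>R (Pi ** B)) \<le> trace (Q ** S) + trace (M ** (B ** S' ** B))"
      by (rule weak_duality[OF assms(1) assms(2) sB h o])
    then show "2 * trace X \<le> z" using trPi z unfolding J_def by simp
  qed
  have upper: "\<forall>z\<in>(\<lambda>P. trace (2 *\<^sub>R (P ** B))) ` \<Omega>. z \<le> 2 * trace X"
  proof
    fix z assume "z \<in> (\<lambda>P. trace (2 *\<^sub>R (P ** B))) ` \<Omega>"
    then obtain P where P: "P \<in> \<Omega>" and z: "z = trace (2 *\<^sub>R (P ** B))" by auto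
    have o: "psd (Q - P ** pinv M ** transpose P)" "transpose P = M ** pinv M ** transpose P"
      using P unfolding \<Omega>_def by auto
    have "trace (2 *\<^sub>R (P ** B)) \<le> trace (Q ** S1) + trace (M ** (B ** S2 ** B))"
      by (rule weak_duality[OF assms(1) assms(2) sB psdS1 psdS2 S212 BMS o])
    then show "z \<le> 2 * trace X" using z trQS1 trS2 by simp
  qed
  have eqs: "psd_sqrt (R ** Q ** R) = X" "pinv X = Xp" "pinv R = Rp" "pinv (B ** M ** B) = Yp"
    unfolding X_def Z_def Xp_def Rp_def Yp_def Y_def by simp_all
  have in1: "2 * trace X \<in> J ` \<S>" using memS J1 by (metis image_eqI)
  have in2: "2 * trace X \<in> (\<lambda>P. trace (2 *\<^sub>R (P ** B))) ` \<Omega>" using PiO trPi by (metis image_eqI)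
  have J1': "J (R ** Xp ** R, Rp ** X ** Rp) = 2 * trace X" using J1 unfolding S1_def S2_def .
  have mem': "(R ** Xp ** R, Rp ** X ** Rp) \<in> \<S>" using memS unfolding S1_def S2_def .
  have G3': "Q ** (R ** Xp ** R) ** Yp ** B ** M = Q ** R ** Xp ** Rp ** B ** M" using G3 unfolding S1_def Pi_def .
  have PiO': "Q ** (R ** Xp ** R) ** Yp ** B ** M \<in> \<Omega>" using PiO G3 unfolding S1_def by simp
  have trPi': "trace (2 *\<^sub>R (Q ** (R ** Xp ** R) ** Yp ** B ** M ** B)) = 2 * trace X"
    using trPi G3 unfolding S1_def by simp
  show ?thesis unfolding eqs
    using in1 lower in2 upper mem' J1' G3' PiO' trPi' by blast
qed

end
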